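(* Let $\phi:M_m\to M_n$ be a positive linear map. Then the dual face $L_\phi'$ meets the interior of the cone $\mathbb T$ if and only if both the product vectors in $P_\phi$ and their partial conjugates span the whole space $\mathbb C^n\otimes\mathbb C^m$. If moreover $\phi$ is exposed, then this is the case if and only if $\phi$ is indecomposable.
   Context: $M_k$ is the algebra of $k\times k$ complex matrices, $M_k^+$ its positive semi-definite cone, and $\mathbb V_1=M_n^+\otimes M_m^+\subset M_n\otimes M_m$ the separable cone. Pairing: $\langle y\otimes x,\phi\rangle=\mathrm{Tr}(\phi(x)y^{\mathrm t})$ for $x\in M_m,y\in M_n,\phi:M_m\to M_n$ linear, extended bilinearly. $\mathbb P_1$ is the cone of positive linear maps $M_m\to M_n$. $L_\phi=\{\lambda\phi:\lambda\ge0\}$ and $L_\phi'=\{A\in\mathbb V_1:\langle A,\phi\rangle=0\}$; for a face $G$ of $\mathbb V_1$, $G'=\{\psi\in\mathbb P_1:\langle A,\psi\rangle=0\ \forall A\in G\}$; $\phi$ is exposed if $L_\phi=L_\phi''$. $P_\phi$ is the set of product vectors $\bar y\otimes x\in\mathbb C^n\otimes\mathbb C^m$ ($x\in\mathbb C^m$, $y\in\mathbb C^n$) with $(\phi(xx^* )y\,|\,y)=0$, equivalently $\langle(\bar y\otimes x)(\bar y\otimes x)^*,\phi\rangle=0$; the partial conjugate of $\bar y\otimes x$ is $\bar y\otimes\bar x$. $\mathbb T$ is the cone of positive semi-definite $A\in M_n\otimes M_m$ whose partial transpose $A^\tau$ is also positive semi-definite; its interior (relative to its affine hull) consists of those $A\in\mathbb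 T$ for which both $A$ and $A^\tau$ have full range. A positive map is decomposable if it is a sum of maps $X\mapsto V^*XV$ and $X\mapsto W^*X^{\mathrm t}W$ ($V,W$ $m\times n$ matrices), and indecomposable otherwise. *)

theory Defs
  imports "HOL-Analysis.Analysis"
begin

text \<open>Index types 'm and 'n (finite) play the role of {1..m} and {1..n}.
  C^m = complex^'m; M_m = complex^'m^'m (row-indexed: A$i$j is entry (i,j)).
  C^n (x) C^m = complex^('n \<times> 'm), with (y (x) x)$(i,k) = y$i * x$k.
  M_n (x) M_m = complex^('n \<times> 'm)^('n \<times> 'm), with
  (Y (x) X)$(i,k)$(j,l) = Y$i$j * X$k$l (Kronecker product).\<close>

definition cadj :: "complex^'b::finite^'a::finite \<Rightarrow> complex^'a::finite^'b::finite" where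
  "cadj A = (\<chi> i j. cnj (A $ j $ i))"

definition mscale :: "complex \<Rightarrow> complex^'b::finite^'a::finite \<Rightarrow> complex^'b::finite^'a::finite" where
  "mscale c A = (\<chi> i j. c * A $ i $ j)"

definition cip :: "complex^'a::finite \<Rightarrow> complex^'a::finite \<Rightarrow> complex" where
  "cip u v = (\<Sum>i\<in>UNIV. u $ i * cnj (v $ i))"

definition psd :: "complex^'a::finite^'a::finite \<Rightarrow> bool" where
  "psd A \<longleftrightarrow> (\<forall>x. Im (cip (A *v x) x) = 0 \<and> 0 \<le> Re (cip (A *v x) x))"

definition full_range :: "complex^'a::finite^'a::finite \<Rightarrow> bool" where
  "full_range A \<longleftrightarrow> range ((*v) A) = UNIV"

definition vouter :: "complex^'a::finite \<Rightarrow> complex^'a::finite^'a::finite" where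
  "vouter x = (\<chi> i j. x $ i * cnj (x $ j))"

definition mat_unit :: "'a::finite \<Rightarrow> 'a::finite \<Rightarrow> complex^'a::finite^'a::finite" where
  "mat_unit k l = (\<chi> i j. if i = k \<and> j = l then 1 else 0)"

definition cconj_vec :: "complex^'a::finite \<Rightarrow> complex^'a::finite" where
  "cconj_vec x = (\<chi> i. cnj (x $ i))"

definition vtens :: "complex^'n::finite \<Rightarrow> complex^'m::finite \<Rightarrow> complex^('n::finite \<times> 'm::finite)" where
  "vtens y x = (\<chi> p. y $ fst p * x $ snd p)"

definition mtens :: "complex^'n::finite^'n::finite \<Rightarrow> complex^'m::finite^'m::finite \<Rightarrow> complex^('n::finite \<times> 'm::finite)^('n::finite \<times> 'm::finite)" where
  "mtens Y X = (\<chi> p q. Y $ fst p $ fst q * X $ snd p $ snd q)"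

definition ptrans :: "complex^('n::finite \<times> 'm::finite)^('n::finite \<times> 'm::finite) \<Rightarrow> complex^('n::finite \<times> 'm::finite)^('n::finite \<times> 'm::finite)" where
  "ptrans A = (\<chi> p q. A $ (fst q, snd p) $ (fst p, snd q))"

definition clinear_map :: "(complex^'m::finite^'m::finite \<Rightarrow> complex^'n::finite^'n::finite) \<Rightarrow> bool" where
  "clinear_map \<phi> \<longleftrightarrow> (\<forall>X Y. \<phi> (X + Y) = \<phi> X + \<phi> Y) \<and> (\<forall>c X. \<phi> (mscale c X) = mscale c (\<phi> X))"

definition positive_map :: "(complex^'m::finite^'m::finite \<Rightarrow> complex^'n::finite^'n::finite) \<Rightarrow> bool" where
  "positive_map \<phi> \<longleftrightarrow> clinear_map \<phi> \<and> (\<forall>X. psd X \<longrightarrow> psd (\<phi> X))"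

text \<open>The pairing <A, phi>, the bilinear extension of <y (x) x, phi> = Tr(phi(x) y^t),
  written out via matrix units.\<close>
definition pairing :: "complex^('n::finite \<times> 'm::finite)^('n::finite \<times> 'm::finite) \<Rightarrow> (complex^'m::finite^'m::finite \<Rightarrow> complex^'n::finite^'n::finite) \<Rightarrow> complex" where
  "pairing A \<phi> = (\<Sum>i\<in>UNIV. \<Sum>j\<in>UNIV. \<Sum>k\<in>UNIV. \<Sum>l\<in>UNIV.
      A $ (i,k) $ (j,l) * \<phi> (mat_unit k l) $ i $ j)"

definition sep_cone :: "(complex^('n::finite \<times> 'm::finite)^('n::finite \<times> 'm::finite)) set" where
  "sep_cone = {A. \<exists>(r::nat) Y X. (\<forall>p<r. psd (Y p) \<and> psd (X p)) \<and> A = (\<Sum>p<r. mtens (Y p) (X p))}"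

text \<open>The cone T of PPT matrices and its (relative) interior.\<close>
definition ppt_cone :: "(complex^('n::finite \<times> 'm::finite)^('n::finite \<times> 'm::finite)) set" where
  "ppt_cone = {A. psd A \<and> psd (ptrans A)}"

definition ppt_interior :: "(complex^('n::finite \<times> 'm::finite)^('n::finite \<times> 'm::finite)) set" where
  "ppt_interior = {A. A \<in> ppt_cone \<and> full_range A \<and> full_range (ptrans A)}"

definition dual_face :: "(complex^'m::finite^'m::finite \<Rightarrow> complex^'n::finite^'n::finite) \<Rightarrow> (complex^('n::finite \<times> 'm::finite)^('n::finite \<times> 'm::finite)) set" where
  "dual_face \<phi> = {A \<in> sep_cone. pairing A \<phi> = 0}"

definition dual_face_maps :: "(complex^('n::finite \<times> 'm::finite)^('n::finite \<times> 'm::finite)) set \<Rightarrow> (complex^'m::finite^'m::finite \<Rightarrow> complex^'n::finite^'n::finite) set" where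
  "dual_face_maps G = {\<psi>. positive_map \<psi> \<and> (\<forall>A\<in>G. pairing A \<psi> = 0)}"

definition ray :: "(complex^'m::finite^'m::finite \<Rightarrow> complex^'n::finite^'n::finite) \<Rightarrow> (complex^'m::finite^'m::finite \<Rightarrow> complex^'n::finite^'n::finite) set" where
  "ray \<phi> = {(\<lambda>X. mscale (complex_of_real t) (\<phi> X)) | t. t \<ge> 0}"

definition exposed :: "(complex^'m::finite^'m::finite \<Rightarrow> complex^'n::finite^'n::finite) \<Rightarrow> bool" where
  "exposed \<phi> \<longleftrightarrow> ray \<phi> = dual_face_maps (dual_face \<phi>)"

definition prod_vecs :: "(complex^'m::finite^'m::finite \<Rightarrow> complex^'n::finite^'n::finite) \<Rightarrow> (complex^('n::finite \<times> 'm::finite)) set" where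
  "prod_vecs \<phi> = {vtens (cconj_vec y) x | x y. cip (\<phi> (vouter x) *v y) y = 0}"

definition prod_vecs_pconj :: "(complex^'m::finite^'m::finite \<Rightarrow> complex^'n::finite^'n::finite) \<Rightarrow> (complex^('n::finite \<times> 'm::finite)) set" where
  "prod_vecs_pconj \<phi> = {vtens (cconj_vec y) (cconj_vec x) | x y. cip (\<phi> (vouter x) *v y) y = 0}"

definition decomposable :: "(complex^'m::finite^'m::finite \<Rightarrow> complex^'n::finite^'n::finite) \<Rightarrow> bool" where
  "decomposable \<phi> \<longleftrightarrow> (\<exists>(r::nat) (s::nat) (V :: nat \<Rightarrow> complex^'n::finite^'m::finite) (W :: nat \<Rightarrow> complex^'n::finite^'m::finite).
     \<phi> = (\<lambda>X. (\<Sum>p<r. cadj (V p) ** X ** V p) + (\<Sum>q<s. cadj (W q) ** transpose X ** W q)))"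

end

theory Submission
  imports Defs
begin


lemma cip_add_left: "cip (u + v) w = cip u w + cip v w"
  by (simp add: cip_def sum.distrib algebra_simps)
lemma cip_add_right: "cip w (u + v) = cip w u + cip w v"
  by (simp add: cip_def sum.distrib algebra_simps)
lemma cip_scale_left: "cip (c *s u) w = c * cip u w"
  by (simp add: cip_def sum_distrib_left algebra_simps)
lemma cip_scale_right: "cip u (c *s w) = cnj c * cip u w"
  by (simp add: cip_def sum_distrib_left algebra_simps)
lemma cip_zero_left[simp]: "cip 0 w = 0" by (simp add: cip_def)
lemma cip_zero_right[simp]: "cip w 0 = 0" by (simp add: cip_def)
lemma cip_sum_left: "cip (sum f S) w = (\<Sum>i\<in>S. cip (f i) w)"
  by (induction S rule: infinite_finite_induct) (auto simp: cip_add_left)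
lemma cip_sum_list_left: "cip (sum_list (map f L)) w = (\<Sum>i\<leftarrow>L. cip (f i) w)"
  by (induction L) (simp_all add: cip_add_left)
lemma cip_cnj: "cnj (cip u v) = cip v u"
  by (simp add: cip_def mult.commute)
lemma cip_self: "cip z z = of_real (\<Sum>i\<in>UNIV. (cmod (z $ i))^2)"
  unfolding cip_def of_real_sum complex_norm_square ..
lemma cip_self_eq0: "cip z z = 0 \<longleftrightarrow> z = 0"
proof
  assume "cip z z = 0"
  then have "complex_of_real (\<Sum>i\<in>UNIV. (cmod (z $ i))^2) = 0" by (simp only: cip_self)
  then have "(\<Sum>i\<in>UNIV. (cmod (z $ i))^2) = 0" by (simp only: of_real_eq_0_iff)
  then have "\<forall>i. (cmod (z $ i))^2 = 0" by (subst (asm) sum_nonneg_eq_0_iff) auto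
  then show "z = 0" by (simp add: vec_eq_iff)
qed simp
lemma cip_axis_right: "cip u (axis i 1) = u $ i"
proof -
  have "cip u (axis i 1) = (\<Sum>j\<in>UNIV. if j = i then u $ j else 0)"
    unfolding cip_def axis_def by (rule sum.cong) auto
  then show ?thesis by simp
qed
lemma cip_axis_left: "cip (axis i 1) u = cnj (u $ i)"
proof -
  have "cip (axis i 1) u = (\<Sum>j\<in>UNIV. if j = i then cnj (u $ j) else 0)"
    unfolding cip_def axis_def by (rule sum.cong) auto
  then show ?thesis by simp
qed

lemma mv_scale: "(A::complex^'a::finite^'b::finite) *v (c *s x) = c *s (A *v x)"
  unfolding vec_eq_iff matrix_vector_mult_def
  by (auto simp: sum_distrib_left ac_simps intro!: sum.cong)
lemma mv_add_matrix: "(A + B) *v x = A *v x + B *v x"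
  by (simp add: vec_eq_iff matrix_vector_mult_def sum.distrib distrib_right)
lemma mv_add: "A *v (x + y) = A *v x + A *v y"
  by (simp add: matrix_vector_right_distrib)
lemma mv_axis: "A *v axis j 1 = (\<chi> i. A $ i $ j)"
  by (simp add: vec_eq_iff matrix_vector_mult_def axis_def if_distrib cong: if_cong)
lemma mv_sum_matrix: "(sum M S) *v x = (\<Sum>p\<in>S. M p *v x)"
  by (induction S rule: infinite_finite_induct) (auto simp: mv_add_matrix)
lemma mv_sum_list_matrix: "(sum_list (map M L)) *v x = (\<Sum>p\<leftarrow>L. M p *v x)"
  by (induction L) (auto simp: mv_add_matrix)
lemma mv_diff_matrix: "((A::complex^'a::finite^'b::finite) - B) *v x = A *v x - B *v x"
  unfolding vec_eq_iff matrix_vector_mult_def by (simp add: sum_subtractf[symmetric] left_diff_distrib)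

lemma vouter_mv: "vouter w *v z = cip z w *s w"
  by (simp add: vec_eq_iff vouter_def matrix_vector_mult_def cip_def sum_distrib_left algebra_simps)
lemma vouter_form: "cip (vouter w *v z) z = of_real ((cmod (cip z w))^2)"
proof -
  have "cip (vouter w *v z) z = cip z w * cnj (cip z w)"
    by (simp add: vouter_mv cip_scale_left cip_cnj)
  then show ?thesis by (simp only: complex_norm_square)
qed

lemma cip_axis_mv: "cip (A *v axis j 1) (axis i 1) = A $ i $ j"
  by (simp add: mv_axis cip_axis_right)

lemma qf_add: "cip ((A::complex^'a::finite^'a) *v (a + b)) (a + b) =
   cip (A *v a) a + cip (A *v a) b + cip (A *v b) a + cip (A *v b) b"
  by (simp add: mv_add cip_add_left cip_add_right)

lemma qf_two: "cip ((A::complex^'a::finite^'a) *v (axis i 1 + t *s axis j 1)) (axis i 1 + t *s axis j 1) =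
   A$i$i + cnj t * A$j$i + t * A$i$j + t * cnj t * A$j$j"
  unfolding qf_add by (simp add: mv_scale cip_scale_left cip_scale_right cip_axis_mv ac_simps)

lemma psd_diag: assumes "psd (A::complex^'a::finite^'a)" shows "Im (A$i$i) = 0" "0 \<le> Re (A$i$i)"
  using assms[unfolded psd_def, rule_format, of "axis i 1"] by (auto simp: cip_axis_mv)

lemma psd_herm: assumes "psd (A::complex^'a::finite^'a)" shows "A$j$i = cnj (A$i$j)"
proof -
  have q: "Im (A$i$i + cnj t * A$j$i + t * A$i$j + t * cnj t * A$j$j) = 0" for t
    using assms[unfolded psd_def, rule_format, of "axis i 1 + t *s axis j 1"] qf_two[of A i t j] by simp
  have d: "Im (A$i$i) = 0" "Im (A$j$j) = 0" using psd_diag[OF assms] by auto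
  from q[of 1] d have 1: "Im (A$j$i) = - Im (A$i$j)" by simp
  from q[of "\<i>"] d have 2: "Re (A$j$i) = Re (A$i$j)" by simp
  show ?thesis using 1 2 by (simp add: complex_eq_iff)
qed

lemma im0: "Im z = 0 \<Longrightarrow> z = complex_of_real (Re z)"
  by (simp add: complex_eq_iff)

lemma psd_zero_diag: assumes "psd (A::complex^'a::finite^'a)" "A$k$k = 0" shows "A$k$j = 0"
proof -
  define c where "c = A$k$j"
  define d where "d = Re (A$j$j)"
  define s where "s = 1 / (d + 1)"
  define n where "n = (cmod c)^2"
  have d0: "0 \<le> d" using psd_diag[OF assms(1)] d_def by auto
  have Ajj: "A$j$j = of_real d" unfolding d_def by (rule im0, rule psd_diag(1)[OF assms(1)])
  have Ajk: "A$j$k = cnj c" unfolding c_def by (rule psd_herm[OF assms(1)])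
  have s0: "0 < s" using d0 s_def by simp
  have dp: "d + 1 > 0" using d0 by simp
  have sd: "s * d < 1" unfolding s_def using dp by (simp add: field_simps)
  define t where "t = - (of_real s * cnj c)"
  have cn: "c * cnj c = of_real n" using complex_norm_square[of c] n_def by simp
  have "A$k$k + cnj t * A$j$k + t * A$k$j + t * cnj t * A$j$j
      = - of_real s * (c * cnj c) - of_real s * (c * cnj c) + of_real s * of_real s * (c * cnj c) * of_real d"
    unfolding t_def Ajk Ajj assms(2) c_def[symmetric] by (simp add: algebra_simps)
  also have "\<dots> = of_real (s * n * (s * d - 2))" unfolding cn by (simp add: algebra_simps)
  finally have "cip (A *v (axis k 1 + t *s axis j 1)) (axis k 1 + t *s axis j 1) = of_real (s * n * (s * d - 2))"
    by (simp only: qf_two)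
  with assms(1)[unfolded psd_def, rule_format, of "axis k 1 + t *s axis j 1"]
  have "0 \<le> s * n * (s * d - 2)" by simp
  moreover have "0 \<le> n" using n_def by simp
  ultimately have "n \<le> 0" using s0 sd
    by (smt (verit, ccfv_SIG) mult_pos_neg mult_pos_pos)
  then have "n = 0" using \<open>0 \<le> n\<close> by simp
  then show ?thesis using n_def c_def by simp
qed

lemma psd_schur:
  fixes A :: "complex^'a::finite^'a"
  assumes psd: "psd A" and r: "A$k$k = of_real r" "r > 0"
  defines "w \<equiv> (\<chi> i. A$i$k / of_real (sqrt r))"
  shows "psd (A - vouter w)" "\<And>j. (A - vouter w)$k$j = 0" "\<And>i. (A - vouter w)$i$k = 0"
    "\<And>i j. (A - vouter w)$i$j = A$i$j - A$i$k * A$k$j / of_real r"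
proof -
  define B where "B = A - vouter w"
  have sqr: "sqrt r * sqrt r = r" using r(2) by simp
  have sq: "of_real (sqrt r) * of_real (sqrt r) = (of_real r :: complex)"
    by (simp only: of_real_mult[symmetric] sqr)
  have sq0: "sqrt r \<noteq> 0" using r(2) by simp
  show Bij: "(A - vouter w)$i$j = A$i$j - A$i$k * A$k$j / of_real r" for i j
  proof -
    have "cnj (A$j$k) = A$k$j" using psd_herm[OF psd, of j k] by simp
    then show ?thesis unfolding w_def vouter_def using sq by (simp add: field_simps)
  qed
  show Bk1: "(A - vouter w)$k$j = 0" for j unfolding Bij r using r(2) by simp
  show Bk2: "(A - vouter w)$i$k = 0" for i unfolding Bij r using r(2) by simp
  show "psd (A - vouter w)"
    unfolding psd_def
  proof
    fix x
    define \<tau> where "\<tau> = - cip x w / of_real (sqrt r)"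
    define x' where "x' = x + \<tau> *s axis k 1"
    have wk: "w $ k = of_real (sqrt r)" unfolding w_def using sq0 sq r(1)
      by (simp add: field_simps)
    have "cip x' w = cip x w + \<tau> * cnj (w $ k)"
      unfolding x'_def by (simp add: cip_add_left cip_scale_left cip_axis_left)
    also have "\<dots> = 0" unfolding wk \<tau>_def using sq0 by simp
    finally have c0: "cip x' w = 0" .
    have Bk: "B *v axis k 1 = 0" unfolding mv_axis using Bk2 B_def by (simp add: vec_eq_iff)
    have Bxk: "cip (B *v x) (axis k 1) = 0"
      unfolding cip_axis_right using Bk1 B_def by (simp add: matrix_vector_mult_def)
    have "cip (B *v x') x' = cip (B *v x) x"
      unfolding x'_def mv_add mv_scale Bk
      by (simp add: cip_add_right cip_scale_right Bxk)
    moreover have "cip (B *v x') x' = cip (A *v x') x'"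
      unfolding B_def mv_diff_matrix vouter_mv c0 by simp
    ultimately have "cip (B *v x) x = cip (A *v x') x'" by simp
    then show "Im (cip ((A - vouter w) *v x) x) = 0 \<and> 0 \<le> Re (cip ((A - vouter w) *v x) x)"
      using psd unfolding psd_def B_def by simp
  qed
qed

lemma psd_decomp_aux:
  assumes "finite S"
  shows "\<forall>A::complex^'a::finite^'a. psd A \<and> (\<forall>i j. A$i$j \<noteq> 0 \<longrightarrow> i \<in> S \<and> j \<in> S)
     \<longrightarrow> (\<exists>ws. A = sum_list (map vouter ws))"
  using assms
proof (induction S rule: finite_induct)
  case empty
  then show ?case by (auto intro!: exI[of _ "[]"] simp: vec_eq_iff)
next
  case (insert k S)
  show ?case
  proof (intro allI impI)
    fix A :: "complex^'a^'a"
    assume H: "psd A \<and> (\<forall>i j. A$i$j \<noteq> 0 \<longrightarrow> i \<in> insert k S \<and> j \<in> insert k S)"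
    then have psd: "psd A" and supp: "\<And>i j. A$i$j \<noteq> 0 \<Longrightarrow> i \<in> insert k S \<and> j \<in> insert k S" by auto
    show "\<exists>ws. A = sum_list (map vouter ws)"
    proof (cases "A$k$k = 0")
      case True
      have r: "A$k$j = 0" for j using psd_zero_diag[OF psd True] .
      have c: "A$j$k = 0" for j using psd_herm[OF psd, of j k] r[of j] by simp
      have "\<forall>i j. A$i$j \<noteq> 0 \<longrightarrow> i \<in> S \<and> j \<in> S"
        using supp r c by blast
      then show ?thesis using insert.IH psd by blast
    next
      case False
      define r where "r = Re (A$k$k)"
      have Akk: "A$k$k = of_real r" unfolding r_def by (rule im0, rule psd_diag(1)[OF psd])
      have r0: "r > 0" using psd_diag[OF psd, of k] r_def False Akk
        by (metis less_eq_real_def of_real_0)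
      define w :: "complex^'a" where "w = (\<chi> i. A$i$k / of_real (sqrt r))"
      note sc = psd_schur[OF psd Akk r0, folded w_def]
      have "\<forall>i j. (A - vouter w)$i$j \<noteq> 0 \<longrightarrow> i \<in> S \<and> j \<in> S"
      proof (intro allI impI)
        fix i j assume nz: "(A - vouter w)$i$j \<noteq> 0"
        then have "i \<noteq> k" "j \<noteq> k" using sc(2,3) by metis+
        moreover have "i \<in> insert k S"
        proof (rule ccontr)
          assume "i \<notin> insert k S"
          then have "A$i$j = 0" "A$i$k = 0" using supp by blast+
          then show False using nz sc(4) by simp
        qed
        moreover have "j \<in> insert k S"
        proof (rule ccontr)
          assume "j \<notin> insert k S"
          then have "A$i$j = 0" "A$k$j = 0" using supp by blast+
          then show False using nz sc(4) by simp
        qed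
        ultimately show "i \<in> S \<and> j \<in> S" by simp
      qed
      then obtain ws where "A - vouter w = sum_list (map vouter ws)" using insert.IH sc(1) by blast
      then have "A = sum_list (map vouter (w # ws))" by (simp add: algebra_simps)
      then show ?thesis by blast
    qed
  qed
qed

lemma psd_decomp:
  assumes "psd (A::complex^'a::finite^'a)" obtains ws where "A = sum_list (map vouter ws)"
  using psd_decomp_aux[of "UNIV::'a set"] assms by auto


lemma vouters_form: "cip (sum_list (map vouter ws) *v z) z = of_real (\<Sum>w\<leftarrow>ws. (cmod (cip z w))^2)"
  by (induction ws) (auto simp: mv_add_matrix cip_add_left vouter_form)

lemma vouters_form_zero:
  "cip (sum_list (map vouter ws) *v z) z = 0 \<longleftrightarrow> (\<forall>w\<in>set ws. cip z w = 0)"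
proof -
  have "cip (sum_list (map vouter ws) *v z) z = 0 \<longleftrightarrow> (\<Sum>w\<leftarrow>ws. (cmod (cip z w))^2) = 0"
    unfolding vouters_form by simp
  also have "\<dots> \<longleftrightarrow> (\<forall>w\<in>set ws. (cmod (cip z w))^2 = 0)"
    by (subst sum_list_nonneg_eq_0_iff) auto
  finally show ?thesis by simp
qed

lemma vouters_mv: "sum_list (map vouter ws) *v z = (\<Sum>w\<leftarrow>ws. cip z w *s w)"
  by (simp add: mv_sum_list_matrix vouter_mv)

lemma vouters_psd: "psd (sum_list (map vouter ws))"
  unfolding psd_def vouters_form by (auto intro!: sum_list_nonneg)

lemma vouter_psd: "psd (vouter w)"
  using vouters_psd[of "[w]"] by simp

lemma psd_form_zero: assumes "psd A" "cip (A *v z) z = 0" shows "A *v z = 0"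
proof -
  obtain ws where A: "A = sum_list (map vouter ws)" using psd_decomp[OF assms(1)] by blast
  then have "\<forall>w\<in>set ws. cip z w = 0" using assms(2) vouters_form_zero by blast
  then have "(\<Sum>w\<leftarrow>ws. cip z w *s w) = 0" by (induction ws) auto
  then show ?thesis unfolding A vouters_mv .
qed

lemma full_range_inj: assumes "full_range (A::complex^'a::finite^'a)" "A *v z = 0" shows "z = 0"
proof -
  have "inj ((*v) A)"
    using vec.linear_surj_imp_inj[OF matrix_vector_mul_linear_gen] assms(1) unfolding full_range_def by blast
  then show ?thesis using assms(2) by (metis injD matrix_vector_mult_0_right)
qed

lemma inj_full_range: assumes "\<And>z. (A::complex^'a::finite^'a) *v z = 0 \<Longrightarrow> z = 0" shows "full_range A"
proof -
  have "inj ((*v) A)"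
  proof (rule injI)
    fix x y assume "A *v x = A *v y"
    then have "A *v (x - y) = 0" by (simp add: matrix_vector_mult_diff_distrib)
    then have "x - y = 0" using assms by blast
    then show "x = y" by simp
  qed
  then show ?thesis using vec.linear_inj_imp_surj[OF matrix_vector_mul_linear_gen] unfolding full_range_def by blast
qed

lemma vouters_range: "sum_list (map vouter ws) *v z \<in> vec.span (set ws)"
  unfolding vouters_mv
proof (induction ws)
  case Nil then show ?case by (simp add: vec.span_zero)
next
  case (Cons w ws)
  have "cip z w *s w \<in> vec.span (set (w # ws))" by (simp add: vec.span_base vec.span_scale)
  moreover have "(\<Sum>w\<leftarrow>ws. cip z w *s w) \<in> vec.span (set (w # ws))"
    using Cons vec.span_mono[of "set ws" "set (w#ws)"] by auto
  ultimately show ?case by (simp add: vec.span_add)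
qed

lemma orth_span_zero:
  assumes "vec.span S = UNIV" "S \<subseteq> vec.span B" "\<And>u. u \<in> B \<Longrightarrow> cip u z = 0"
  shows "z = 0"
proof -
  have sub: "vec.subspace {u. cip u z = 0}"
    by (auto simp: vec.subspace_def cip_add_left cip_scale_left)
  have "vec.span B \<subseteq> {u. cip u z = 0}" using vec.span_minimal[OF _ sub] assms(3) by blast
  moreover have "vec.span S \<subseteq> vec.span B" using assms(2) by (simp add: vec.span_minimal)
  ultimately have "cip z z = 0" using assms(1) by blast
  then show ?thesis by (simp add: cip_self_eq0)
qed

lemma mtens_vouter: "mtens (vouter a) (vouter b) = vouter (vtens a b)"
  by (simp add: vec_eq_iff mtens_def vouter_def vtens_def ac_simps)

lemma mtens_add_left: "mtens (A + B) X = mtens A X + mtens B X"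
  by (simp add: vec_eq_iff mtens_def algebra_simps)
lemma mtens_add_right: "mtens Y (A + B) = mtens Y A + mtens Y B"
  by (simp add: vec_eq_iff mtens_def algebra_simps)
lemma mtens_zero_left[simp]: "mtens 0 X = 0" by (simp add: vec_eq_iff mtens_def)
lemma mtens_zero_right[simp]: "mtens Y 0 = 0" by (simp add: vec_eq_iff mtens_def)
lemma mtens_sum_list_left: "mtens (sum_list (map f L)) X = sum_list (map (\<lambda>a. mtens (f a) X) L)"
  by (induction L) (auto simp: mtens_add_left)
lemma mtens_sum_list_right: "mtens Y (sum_list (map f L)) = sum_list (map (\<lambda>a. mtens Y (f a)) L)"
  by (induction L) (auto simp: mtens_add_right)

lemma cconj_cconj[simp]: "cconj_vec (cconj_vec x) = x" by (simp add: vec_eq_iff cconj_vec_def)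

lemma ptrans_vouter: "ptrans (vouter (vtens a b)) = vouter (vtens (cconj_vec a) b)"
  by (simp add: vec_eq_iff ptrans_def vouter_def vtens_def cconj_vec_def ac_simps)
lemma ptrans_add: "ptrans (A + B) = ptrans A + ptrans B"
  by (simp add: vec_eq_iff ptrans_def)
lemma ptrans_zero[simp]: "ptrans 0 = 0" by (simp add: vec_eq_iff ptrans_def)
lemma ptrans_sum_list: "ptrans (sum_list (map f L)) = sum_list (map (\<lambda>a. ptrans (f a)) L)"
  by (induction L) (auto simp: ptrans_add)
lemma ptrans_ptrans[simp]: "ptrans (ptrans A) = A"
  by (simp add: vec_eq_iff ptrans_def)

lemma pairing_add: "pairing (A + B) \<phi> = pairing A \<phi> + pairing B \<phi>"
  by (simp add: pairing_def sum.distrib algebra_simps)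
lemma pairing_zero[simp]: "pairing 0 \<phi> = 0" by (simp add: pairing_def)
lemma pairing_sum_list: "pairing (sum_list (map f L)) \<phi> = (\<Sum>a\<leftarrow>L. pairing (f a) \<phi>)"
  by (induction L) (auto simp: pairing_add)
lemma pairing_sum: "pairing (sum f S) \<phi> = (\<Sum>a\<in>S. pairing (f a) \<phi>)"
  by (induction S rule: infinite_finite_induct) (auto simp: pairing_add)

lemma clin_zero: assumes "clinear_map \<phi>" shows "\<phi> 0 = 0"
proof -
  have "\<phi> (0 + 0) = \<phi> 0 + \<phi> 0" using assms unfolding clinear_map_def by blast
  then show ?thesis by simp
qed

lemma clin_sum: assumes "clinear_map \<phi>" shows "\<phi> (sum f S) = (\<Sum>a\<in>S. \<phi> (f a))"
  using assms clin_zero[OF assms]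
  by (induction S rule: infinite_finite_induct) (auto simp: clinear_map_def)

lemma mult_if01: "(x::complex) * (if P then 1 else 0) = (if P then x else 0)" by simp

lemma mat_expand: "X = (\<Sum>k\<in>UNIV. \<Sum>l\<in>UNIV. mscale (X$k$l) (mat_unit k l))"
proof -
  have "(\<Sum>k\<in>UNIV. \<Sum>l\<in>UNIV. mscale (X$k$l) (mat_unit k l)) $ i $ j = X $ i $ j" for i j
  proof -
    have "(\<Sum>k\<in>UNIV. \<Sum>l\<in>UNIV. mscale (X$k$l) (mat_unit k l)) $ i $ j
        = (\<Sum>k\<in>UNIV. \<Sum>l\<in>UNIV. X$k$l * (if i = k \<and> j = l then 1 else 0))"
      by (simp add: mscale_def mat_unit_def)
    also have "\<dots> = (\<Sum>k\<in>UNIV. if k = i then X$k$j else 0)"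
    proof (rule sum.cong[OF refl])
      fix k show "(\<Sum>l\<in>UNIV. X$k$l * (if i = k \<and> j = l then 1 else 0)) = (if k = i then X$k$j else 0)"
        by (cases "k = i") (simp_all add: mult_if01 eq_commute[of j])
    qed
    also have "\<dots> = X $ i $ j" by simp
    finally show ?thesis .
  qed
  then show ?thesis by (simp add: vec_eq_iff)
qed

lemma choi: assumes "clinear_map \<phi>"
  shows "\<phi> X $ i $ j = (\<Sum>k\<in>UNIV. \<Sum>l\<in>UNIV. X$k$l * \<phi> (mat_unit k l) $ i $ j)"
proof -
  have "\<phi> X = (\<Sum>k\<in>UNIV. \<Sum>l\<in>UNIV. mscale (X$k$l) (\<phi> (mat_unit k l)))"
    apply (subst mat_expand[of X])
    using assms by (simp add: clin_sum clinear_map_def)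
  then show ?thesis by (simp add: mscale_def)
qed


lemma vouter_pv_entry: "vouter (vtens (cconj_vec y) x) $ (i,k) $ (j,l) = cnj (y$i) * y$j * (x$k * cnj (x$l))"
  by (simp add: vouter_def vtens_def cconj_vec_def)

lemma choi_vouter: assumes "clinear_map \<phi>"
  shows "\<phi> (vouter x) $ i $ j = (\<Sum>k\<in>UNIV. \<Sum>l\<in>UNIV. x$k * cnj (x$l) * \<phi> (mat_unit k l) $ i $ j)"
  by (rule trans[OF choi[OF assms]]) (simp add: vouter_def)

lemma pairing_pv: assumes "clinear_map \<phi>"
  shows "pairing (vouter (vtens (cconj_vec y) x)) \<phi> = cip (\<phi> (vouter x) *v y) y"
proof -
  have 1: "pairing (vouter (vtens (cconj_vec y) x)) \<phi> = (\<Sum>i\<in>UNIV. \<Sum>j\<in>UNIV. \<Sum>k\<in>UNIV. \<Sum>l\<in>UNIV. cnj (y$i) * y$j * (x$k * cnj (x$l)) * \<phi> (mat_unit k l) $ i $ j)"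
    unfolding pairing_def vouter_pv_entry by (rule refl)
  have "cip (\<phi> (vouter x) *v y) y = (\<Sum>i\<in>UNIV. (\<Sum>j\<in>UNIV. (\<Sum>k\<in>UNIV. \<Sum>l\<in>UNIV. x$k * cnj (x$l) * \<phi> (mat_unit k l) $ i $ j) * y$j) * cnj (y$i))"
    unfolding cip_def matrix_vector_mult_def choi_vouter[OF assms] by simp
  also have "\<dots> = (\<Sum>i\<in>UNIV. \<Sum>j\<in>UNIV. \<Sum>k\<in>UNIV. \<Sum>l\<in>UNIV. cnj (y$i) * y$j * (x$k * cnj (x$l)) * \<phi> (mat_unit k l) $ i $ j)"
    by (simp add: sum_distrib_left sum_distrib_right mult.commute mult.left_commute)
  finally show ?thesis using 1 by simp
qed

lemma sum_pair: "(\<Sum>p\<in>(UNIV::('a::finite \<times> 'b::finite) set). f p) = (\<Sum>i\<in>UNIV. \<Sum>k\<in>UNIV. f (i,k))"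
  by (simp add: UNIV_Times_UNIV[symmetric] sum.cartesian_product del: UNIV_Times_UNIV)

lemma adV_unit: "(cadj V ** mat_unit k l ** (V::complex^'n::finite^'m::finite))$i$j = cnj (V$k$i) * V$l$j"
proof -
  have "(cadj V ** mat_unit k l ** V)$i$j = (\<Sum>b\<in>UNIV. (\<Sum>a\<in>UNIV. cnj (V$a$i) * (if a = k \<and> b = l then 1 else 0)) * V$b$j)"
    by (simp add: matrix_matrix_mult_def cadj_def mat_unit_def)
  also have "\<dots> = (\<Sum>b\<in>UNIV. (if b = l then cnj (V$k$i) else 0) * V$b$j)"
    by (rule sum.cong) (auto simp: if_distrib cong: if_cong)
  also have "\<dots> = (\<Sum>b\<in>UNIV. if b = l then cnj (V$k$i) * V$b$j else 0)"
    by (rule sum.cong) auto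
  also have "\<dots> = cnj (V$k$i) * V$l$j" by simp
  finally show ?thesis .
qed

lemma adW_unit: "(cadj W ** transpose (mat_unit k l) ** (W::complex^'n::finite^'m::finite))$i$j = cnj (W$l$i) * W$k$j"
proof -
  have "transpose (mat_unit k l) = mat_unit l k" by (auto simp: vec_eq_iff transpose_def mat_unit_def)
  then show ?thesis by (simp add: adV_unit)
qed

lemma pairing_adV:
  fixes V :: "complex^'n::finite^'m::finite" and A :: "complex^('n \<times> 'm)^('n \<times> 'm)"
  shows "pairing A (\<lambda>X. cadj V ** X ** V) = cip (A *v (\<chi> p. V $ snd p $ fst p)) (\<chi> p. V $ snd p $ fst p)"
proof -
  have "cip (A *v (\<chi> p. V $ snd p $ fst p)) (\<chi> p. V $ snd p $ fst p)
     = (\<Sum>i\<in>UNIV. \<Sum>k\<in>UNIV. \<Sum>j\<in>UNIV. \<Sum>l\<in>UNIV. A$(i,k)$(j,l) * (cnj (V$k$i) * V$l$j))"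
    by (simp add: cip_def matrix_vector_mult_def sum_pair sum_distrib_right sum_distrib_left ac_simps)
  also have "\<dots> = (\<Sum>i\<in>UNIV. \<Sum>j\<in>UNIV. \<Sum>k\<in>UNIV. \<Sum>l\<in>UNIV. A$(i,k)$(j,l) * (cnj (V$k$i) * V$l$j))"
    by (rule sum.cong[OF refl], rule sum.swap)
  also have "\<dots> = pairing A (\<lambda>X. cadj V ** X ** V)"
    by (simp add: pairing_def adV_unit)
  finally show ?thesis by simp
qed

lemma pairing_adW:
  fixes W :: "complex^'n::finite^'m::finite" and A :: "complex^('n \<times> 'm)^('n \<times> 'm)"
  shows "pairing A (\<lambda>X. cadj W ** transpose X ** W) = cip (ptrans A *v (\<chi> p. cnj (W $ snd p $ fst p))) (\<chi> p. cnj (W $ snd p $ fst p))"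
proof -
  have "cip (ptrans A *v (\<chi> p. cnj (W $ snd p $ fst p))) (\<chi> p. cnj (W $ snd p $ fst p))
     = (\<Sum>j\<in>UNIV. \<Sum>k\<in>UNIV. \<Sum>i\<in>UNIV. \<Sum>l\<in>UNIV. A$(i,k)$(j,l) * (cnj (W$l$i) * W$k$j))"
    by (simp add: cip_def ptrans_def matrix_vector_mult_def sum_pair sum_distrib_right sum_distrib_left ac_simps)
  also have "\<dots> = (\<Sum>j\<in>UNIV. \<Sum>i\<in>UNIV. \<Sum>k\<in>UNIV. \<Sum>l\<in>UNIV. A$(i,k)$(j,l) * (cnj (W$l$i) * W$k$j))"
    by (rule sum.cong[OF refl], rule sum.swap)
  also have "\<dots> = (\<Sum>i\<in>UNIV. \<Sum>j\<in>UNIV. \<Sum>k\<in>UNIV. \<Sum>l\<in>UNIV. A$(i,k)$(j,l) * (cnj (W$l$i) * W$k$j))"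
    by (rule sum.swap)
  also have "\<dots> = pairing A (\<lambda>X. cadj W ** transpose X ** W)"
    by (simp add: pairing_def adW_unit)
  finally show ?thesis by simp
qed



definition pvec :: "(complex^'m::finite) \<times> (complex^'n::finite) \<Rightarrow> complex^('n \<times> 'm)" where
  "pvec p = vtens (cconj_vec (snd p)) (fst p)"
definition pvec' :: "(complex^'m::finite) \<times> (complex^'n::finite) \<Rightarrow> complex^('n \<times> 'm)" where
  "pvec' p = vtens (snd p) (fst p)"
definition pvsum :: "((complex^'m::finite) \<times> (complex^'n::finite)) list \<Rightarrow> complex^('n \<times> 'm)^('n \<times> 'm)" where
  "pvsum L = sum_list (map vouter (map pvec L))"

lemma pvsum_append: "pvsum (L1 @ L2) = pvsum L1 + pvsum L2"
  by (simp add: pvsum_def)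

lemma mtens_pvsum: "mtens (sum_list (map vouter ws)) (sum_list (map vouter xs))
   = pvsum (concat (map (\<lambda>w. map (\<lambda>x. (x, cconj_vec w)) xs) ws))"
proof (induction ws)
  case Nil then show ?case by (simp add: pvsum_def)
next
  case (Cons w ws)
  have "mtens (vouter w) (sum_list (map vouter xs)) = pvsum (map (\<lambda>x. (x, cconj_vec w)) xs)"
    by (induction xs) (simp_all add: pvsum_def pvec_def mtens_add_right mtens_vouter)
  then show ?case using Cons by (simp add: mtens_add_left pvsum_append)
qed

lemma sep_decomp: assumes "A \<in> sep_cone" obtains L where "A = pvsum L"
proof -
  obtain r :: nat and Y X where psd: "\<forall>p<r. psd (Y p) \<and> psd (X p)" and A: "A = (\<Sum>p<r. mtens (Y p) (X p))"
    using assms unfolding sep_cone_def by blast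
  have "\<exists>L. (\<Sum>p<k. mtens (Y p) (X p)) = pvsum L" if "k \<le> r" for k
    using that
  proof (induction k)
    case 0 then show ?case by (auto intro!: exI[of _ "[]"] simp: pvsum_def)
  next
    case (Suc k)
    then obtain L where L: "(\<Sum>p<k. mtens (Y p) (X p)) = pvsum L" by auto
    obtain ws where ws: "Y k = sum_list (map vouter ws)" using psd_decomp psd Suc.prems by (meson Suc_le_lessD)
    obtain xs where xs: "X k = sum_list (map vouter xs)" using psd_decomp psd Suc.prems by (meson Suc_le_lessD)
    show ?case using L ws xs mtens_pvsum[of ws xs] by (auto simp: pvsum_append intro!: exI[of _ "L @ _"])
  qed
  then show ?thesis using A that by blast
qed

lemma pvsum_sep:
  fixes L :: "((complex^'m::finite) \<times> (complex^'n::finite)) list"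
  shows "pvsum L \<in> sep_cone"
proof -
  have 1: "pvsum L = sum_list (map (\<lambda>q. mtens (vouter (cconj_vec (snd q))) (vouter (fst q))) L)"
    unfolding pvsum_def by (simp add: mtens_vouter pvec_def o_def)
  have 2: "sum_list (map f L) = (\<Sum>p<length L. f (L!p))" for f :: "_ \<Rightarrow> complex^('n \<times> 'm)^('n \<times> 'm)"
    by (subst sum_list_sum_nth) (simp add: atLeast0LessThan)
  have "pvsum L = (\<Sum>p<length L. mtens (vouter (cconj_vec (snd (L!p)))) (vouter (fst (L!p))))"
    unfolding 1 2 ..
  then show ?thesis unfolding sep_cone_def
    by (intro CollectI exI[of _ "length L"] exI[of _ "\<lambda>p. vouter (cconj_vec (snd (L!p)))"]
        exI[of _ "\<lambda>p. vouter (fst (L!p))"]) (simp add: vouter_psd)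
qed

lemma ptrans_pvsum: "ptrans (pvsum L) = sum_list (map vouter (map pvec' L))"
  unfolding pvsum_def by (induction L) (simp_all add: ptrans_add pvec_def pvec'_def ptrans_vouter)

lemma pairing_pvsum: assumes "clinear_map \<phi>"
  shows "pairing (pvsum L) \<phi> = (\<Sum>p\<leftarrow>L. cip (\<phi> (vouter (fst p)) *v snd p) (snd p))"
  unfolding pvsum_def by (induction L) (simp_all add: pairing_add pvec_def pairing_pv[OF assms])

lemma pos_q: assumes "positive_map \<phi>"
  shows "Im (cip (\<phi> (vouter x) *v y) y) = 0" "0 \<le> Re (cip (\<phi> (vouter x) *v y) y)"
  using assms vouter_psd[of x] unfolding positive_map_def psd_def by blast+

lemma nonneg_list_zero:
  assumes "\<And>a. a \<in> set L \<Longrightarrow> Im (f a) = 0 \<and> 0 \<le> Re (f a)" "(\<Sum>a\<leftarrow>L. f a) = (0::complex)"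
  shows "\<forall>a\<in>set L. f a = 0"
proof -
  have "Re (\<Sum>a\<leftarrow>L. f a) = (\<Sum>a\<leftarrow>L. Re (f a))" by (induction L) auto
  then have "(\<Sum>a\<leftarrow>L. Re (f a)) = 0" using assms(2) by simp
  then have "\<forall>a\<in>set L. Re (f a) = 0" using assms(1) by (subst (asm) sum_list_nonneg_eq_0_iff) auto
  then show ?thesis using assms(1) by (simp add: complex_eq_iff)
qed

lemma nonneg_sum_zero:
  assumes "finite S" "\<And>a. a \<in> S \<Longrightarrow> Im (f a) = 0 \<and> 0 \<le> Re (f a)" "(\<Sum>a\<in>S. f a) = (0::complex)"
  shows "\<forall>a\<in>S. f a = 0"
proof -
  have "Re (\<Sum>a\<in>S. f a) = (\<Sum>a\<in>S. Re (f a))" by simp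
  then have "(\<Sum>a\<in>S. Re (f a)) = 0" using assms(3) by simp
  then have "\<forall>a\<in>S. Re (f a) = 0" using assms(1,2) by (subst (asm) sum_nonneg_eq_0_iff) auto
  then show ?thesis using assms(2) by (simp add: complex_eq_iff)
qed

lemma dual_face_decomp:
  assumes "positive_map \<phi>" "A \<in> dual_face \<phi>"
  obtains L where "A = pvsum L" "\<forall>p\<in>set L. cip (\<phi> (vouter (fst p)) *v snd p) (snd p) = 0"
proof -
  have cl: "clinear_map \<phi>" using assms(1) positive_map_def by blast
  obtain L where L: "A = pvsum L" using sep_decomp assms(2) unfolding dual_face_def by blast
  have "(\<Sum>p\<leftarrow>L. cip (\<phi> (vouter (fst p)) *v snd p) (snd p)) = 0"
    using assms(2) L pairing_pvsum[OF cl] unfolding dual_face_def by simp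
  then have "\<forall>p\<in>set L. cip (\<phi> (vouter (fst p)) *v snd p) (snd p) = 0"
    by (rule nonneg_list_zero[rotated]) (use pos_q[OF assms(1)] in auto)
  then show ?thesis using L that by blast
qed

lemma cconj_add: "cconj_vec (a + b) = cconj_vec a + cconj_vec b"
  by (simp add: vec_eq_iff cconj_vec_def)
lemma cconj_scale: "cconj_vec (c *s a) = cnj c *s cconj_vec a"
  by (simp add: vec_eq_iff cconj_vec_def)
lemma cconj_zero[simp]: "cconj_vec 0 = 0" by (simp add: vec_eq_iff cconj_vec_def)
lemma cconj_eq0: "cconj_vec z = 0 \<longleftrightarrow> z = 0"
  by (metis cconj_cconj cconj_zero)
lemma cip_cconj: "cip (cconj_vec a) (cconj_vec b) = cip b a"
  by (simp add: cip_def cconj_vec_def mult.commute)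
lemma vtens_cconj: "vtens (cconj_vec y) (cconj_vec x) = cconj_vec (vtens y x)"
  by (simp add: vec_eq_iff vtens_def cconj_vec_def)

lemma span_cconj: assumes "v \<in> vec.span (cconj_vec ` S)" shows "cconj_vec v \<in> vec.span S"
proof -
  have sub: "vec.subspace {v. cconj_vec v \<in> vec.span S}"
    by (auto simp: vec.subspace_def cconj_add cconj_scale vec.span_add vec.span_scale vec.span_zero)
  have "cconj_vec ` S \<subseteq> {v. cconj_vec v \<in> vec.span S}" by (auto simp: vec.span_base)
  then have "vec.span (cconj_vec ` S) \<subseteq> {v. cconj_vec v \<in> vec.span S}"
    using vec.span_minimal[OF _ sub] by blast
  then show ?thesis using assms by blast
qed

lemma orth_exists:
  fixes S :: "(complex^'a::finite) set"
  assumes "vec.span S \<noteq> UNIV"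
  obtains z where "z \<noteq> 0" "\<And>u. u \<in> S \<Longrightarrow> cip u z = 0"
proof -
  obtain B where B: "B \<subseteq> S" "vec.independent B" "S \<subseteq> vec.span B"
    using vec.maximal_independent_subset[of S] by blast
  have "finite B" using B(2) vec.finiteI_independent by blast
  then obtain ws where ws: "set ws = B" using finite_list by blast
  define M where "M = sum_list (map vouter ws)"
  have "\<not> (\<forall>z. M *v z = 0 \<longrightarrow> z = 0)"
  proof
    assume "\<forall>z. M *v z = 0 \<longrightarrow> z = 0"
    then have "full_range M" using inj_full_range by blast
    then have "range ((*v) M) = UNIV" unfolding full_range_def .
    moreover have "range ((*v) M) \<subseteq> vec.span B" using vouters_range[of ws] ws M_def by auto
    moreover have "vec.span B \<subseteq> vec.span S" using B(1) vec.span_mono by blast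
    ultimately show False using assms by blast
  qed
  then obtain z where z: "M *v z = 0" "z \<noteq> 0" by blast
  then have "cip (M *v z) z = 0" by simp
  then have "\<forall>w\<in>B. cip z w = 0" using vouters_form_zero ws M_def by blast
  then have Bz: "\<forall>w\<in>B. cip w z = 0" by (metis cip_cnj complex_cnj_zero)
  have sub: "vec.subspace {u. cip u z = 0}"
    by (auto simp: vec.subspace_def cip_add_left cip_scale_left)
  have "vec.span B \<subseteq> {u. cip u z = 0}" using vec.span_minimal[OF _ sub] Bz by blast
  then show ?thesis using that z(2) B(3) by blast
qed

lemma matrix_add_rdistrib': "(B + C) ** A = B ** A + C ** (A::complex^'c::finite^'b::finite)"
  by (simp add: vec_eq_iff matrix_matrix_mult_def sum.distrib distrib_right)

lemma mscale_mult_left: "mscale c A ** B = mscale c (A ** (B::complex^'c::finite^'b::finite))"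
  by (simp add: vec_eq_iff mscale_def matrix_matrix_mult_def sum_distrib_left mult.assoc)
lemma mscale_mult_right: "(A::complex^'b::finite^'a::finite) ** mscale c B = mscale c (A ** B)"
  by (simp add: vec_eq_iff mscale_def matrix_matrix_mult_def sum_distrib_left mult.left_commute)
lemma transpose_mscale: "transpose (mscale c A) = mscale c (transpose A)"
  by (simp add: vec_eq_iff mscale_def transpose_def)
lemma transpose_add': "transpose (A + B) = transpose A + transpose (B::complex^'a::finite^'b::finite)"
  by (simp add: vec_eq_iff transpose_def)

lemma cadj_mv: "cip (cadj V *v u) y = cip u (V *v (y::complex^'b::finite))"
proof -
  have "cip (cadj V *v u) y = (\<Sum>i\<in>UNIV. \<Sum>j\<in>UNIV. cnj (V$j$i) * u$j * cnj (y$i))"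
    by (simp add: cip_def cadj_def matrix_vector_mult_def sum_distrib_right)
  also have "\<dots> = (\<Sum>j\<in>UNIV. \<Sum>i\<in>UNIV. cnj (V$j$i) * u$j * cnj (y$i))" by (rule sum.swap)
  also have "\<dots> = cip u (V *v y)"
    by (simp add: cip_def matrix_vector_mult_def sum_distrib_left ac_simps)
  finally show ?thesis .
qed

lemma transpose_form: "cip (transpose X *v u) u = cip ((X::complex^'a::finite^'a) *v cconj_vec u) (cconj_vec u)"
proof -
  have "cip (transpose X *v u) u = (\<Sum>i\<in>UNIV. \<Sum>j\<in>UNIV. X$j$i * u$j * cnj (u$i))"
    by (simp add: cip_def transpose_def matrix_vector_mult_def sum_distrib_right)
  also have "\<dots> = (\<Sum>j\<in>UNIV. \<Sum>i\<in>UNIV. X$j$i * u$j * cnj (u$i))" by (rule sum.swap)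
  also have "\<dots> = cip (X *v cconj_vec u) (cconj_vec u)"
    by (simp add: cip_def cconj_vec_def matrix_vector_mult_def sum_distrib_right sum_distrib_left ac_simps)
  finally show ?thesis .
qed

lemma psd_transpose: "psd X \<Longrightarrow> psd (transpose (X::complex^'a::finite^'a))"
  unfolding psd_def transpose_form by blast

lemma adV_pos: "positive_map (\<lambda>X. cadj V ** X ** (V::complex^'n::finite^'m::finite))"
  unfolding positive_map_def clinear_map_def
proof (intro conjI allI impI)
  fix X Y :: "complex^'m^'m"
  show "cadj V ** (X + Y) ** V = cadj V ** X ** V + cadj V ** Y ** V"
    by (simp add: matrix_add_ldistrib matrix_add_rdistrib')
next
  fix c and X :: "complex^'m^'m"
  show "cadj V ** mscale c X ** V = mscale c (cadj V ** X ** V)"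
    by (simp add: mscale_mult_left mscale_mult_right)
next
  fix X :: "complex^'m^'m" assume "psd X"
  then show "psd (cadj V ** X ** V)"
    unfolding psd_def by (simp add: matrix_vector_mul_assoc[symmetric] cadj_mv)
qed

lemma adW_pos: "positive_map (\<lambda>X. cadj W ** transpose X ** (W::complex^'n::finite^'m::finite))"
  unfolding positive_map_def clinear_map_def
proof (intro conjI allI impI)
  fix X Y :: "complex^'m^'m"
  show "cadj W ** transpose (X + Y) ** W = cadj W ** transpose X ** W + cadj W ** transpose Y ** W"
    by (simp add: transpose_add' matrix_add_ldistrib matrix_add_rdistrib')
next
  fix c and X :: "complex^'m^'m"
  show "cadj W ** transpose (mscale c X) ** W = mscale c (cadj W ** transpose X ** W)"
    by (simp add: transpose_mscale mscale_mult_left mscale_mult_right)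
next
  fix X :: "complex^'m^'m" assume "psd X"
  then have "psd (transpose X)" by (rule psd_transpose)
  then show "psd (cadj W ** transpose X ** W)"
    unfolding psd_def by (simp add: matrix_vector_mul_assoc[symmetric] cadj_mv)
qed

lemma pairing_fadd: "pairing A (\<lambda>X. F X + G X) = pairing A F + pairing A G"
  by (simp add: pairing_def sum.distrib algebra_simps)
lemma pairing_fzero: "pairing A (\<lambda>X. 0) = 0"
  by (simp add: pairing_def)
lemma pairing_fsum: "pairing A (\<lambda>X. \<Sum>p\<in>S. f p X) = (\<Sum>p\<in>S. pairing A (f p))"
proof (induction S rule: infinite_finite_induct)
  case (infinite S) then show ?case by (simp add: pairing_fzero)
next
  case empty then show ?case by (simp add: pairing_fzero)
next
  case (insert x F) then show ?case by (simp add: pairing_fadd)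
qed
lemma pairing_fscale: "pairing A (\<lambda>X. mscale c (F X)) = c * pairing A F"
  by (simp add: pairing_def mscale_def sum_distrib_left ac_simps)

lemma cadj_mscale_real: "cadj (mscale (of_real c) V) = mscale (of_real c) (cadj V)"
  by (simp add: vec_eq_iff cadj_def mscale_def)
lemma mscale_mscale: "mscale a (mscale b A) = mscale (a * b) A"
  by (simp add: vec_eq_iff mscale_def)
lemma mscale_one: "mscale 1 A = A"
  by (simp add: vec_eq_iff mscale_def)



lemma prod_vecs_img: "prod_vecs \<phi> = pvec ` {p. cip (\<phi> (vouter (fst p)) *v snd p) (snd p) = 0}"
  unfolding prod_vecs_def pvec_def
proof (rule set_eqI, rule iffI)
  fix v assume "v \<in> {vtens (cconj_vec y) x |x y. cip (\<phi> (vouter x) *v y) y = 0}"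
  then obtain x y where "v = vtens (cconj_vec y) x" "cip (\<phi> (vouter x) *v y) y = 0" by blast
  then show "v \<in> (\<lambda>p. vtens (cconj_vec (snd p)) (fst p)) ` {p. cip (\<phi> (vouter (fst p)) *v snd p) (snd p) = 0}"
    by (intro image_eqI[of _ _ "(x,y)"]) auto
next
  fix v assume "v \<in> (\<lambda>p. vtens (cconj_vec (snd p)) (fst p)) ` {p. cip (\<phi> (vouter (fst p)) *v snd p) (snd p) = 0}"
  then obtain p where "v = vtens (cconj_vec (snd p)) (fst p)" "cip (\<phi> (vouter (fst p)) *v snd p) (snd p) = 0" by blast
  then show "v \<in> {vtens (cconj_vec y) x |x y. cip (\<phi> (vouter x) *v y) y = 0}" by blast
qed

lemma prod_vecs_pconj_img: "prod_vecs_pconj \<phi> =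
   (\<lambda>p. vtens (cconj_vec (snd p)) (cconj_vec (fst p))) ` {p. cip (\<phi> (vouter (fst p)) *v snd p) (snd p) = 0}"
  unfolding prod_vecs_pconj_def
proof (rule set_eqI, rule iffI)
  fix v assume "v \<in> {vtens (cconj_vec y) (cconj_vec x) |x y. cip (\<phi> (vouter x) *v y) y = 0}"
  then obtain x y where "v = vtens (cconj_vec y) (cconj_vec x)" "cip (\<phi> (vouter x) *v y) y = 0" by blast
  then show "v \<in> (\<lambda>p. vtens (cconj_vec (snd p)) (cconj_vec (fst p))) ` {p. cip (\<phi> (vouter (fst p)) *v snd p) (snd p) = 0}"
    by (intro image_eqI[of _ _ "(x,y)"]) auto
next
  fix v assume "v \<in> (\<lambda>p. vtens (cconj_vec (snd p)) (cconj_vec (fst p))) ` {p. cip (\<phi> (vouter (fst p)) *v snd p) (snd p) = 0}"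
  then obtain p where "v = vtens (cconj_vec (snd p)) (cconj_vec (fst p))" "cip (\<phi> (vouter (fst p)) *v snd p) (snd p) = 0" by blast
  then show "v \<in> {vtens (cconj_vec y) (cconj_vec x) |x y. cip (\<phi> (vouter x) *v y) y = 0}" by blast
qed

lemma part1_fwd:
  fixes \<phi> :: "complex^'m::finite^'m \<Rightarrow> complex^'n::finite^'n"
  assumes pos: "positive_map \<phi>" and A: "A \<in> dual_face \<phi>" "A \<in> ppt_interior"
  shows "vec.span (prod_vecs \<phi>) = UNIV \<and> vec.span (prod_vecs_pconj \<phi>) = UNIV"
proof -
  obtain L where L: "A = pvsum L" "\<forall>p\<in>set L. cip (\<phi> (vouter (fst p)) *v snd p) (snd p) = 0"
    using dual_face_decomp[OF pos A(1)] by blast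
  have fr: "full_range A" "full_range (ptrans A)" using A(2) unfolding ppt_interior_def by auto
  have s1: "set (map pvec L) \<subseteq> prod_vecs \<phi>" using L(2) unfolding prod_vecs_img by auto
  have "v \<in> vec.span (prod_vecs \<phi>)" for v
  proof -
    obtain z where "v = A *v z" using fr(1) unfolding full_range_def by (metis UNIV_I image_iff)
    then have "v \<in> vec.span (set (map pvec L))" using vouters_range L(1) unfolding pvsum_def by metis
    then show ?thesis using vec.span_mono[OF s1] by blast
  qed
  moreover have "v \<in> vec.span (prod_vecs_pconj \<phi>)" for v
  proof -
    obtain z where "cconj_vec v = ptrans A *v z" using fr(2) unfolding full_range_def by (metis UNIV_I image_iff)
    then have "cconj_vec v \<in> vec.span (set (map pvec' L))" using vouters_range L(1) ptrans_pvsum by metis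
    moreover have "set (map pvec' L) \<subseteq> cconj_vec ` prod_vecs_pconj \<phi>"
    proof
      fix u assume "u \<in> set (map pvec' L)"
      then obtain p where p: "p \<in> set L" "u = pvec' p" by auto
      have "u = cconj_vec (vtens (cconj_vec (snd p)) (cconj_vec (fst p)))"
        unfolding p(2) pvec'_def vtens_cconj by simp
      moreover have "vtens (cconj_vec (snd p)) (cconj_vec (fst p)) \<in> prod_vecs_pconj \<phi>"
        unfolding prod_vecs_pconj_img using L(2) p(1) by blast
      ultimately show "u \<in> cconj_vec ` prod_vecs_pconj \<phi>" by blast
    qed
    ultimately have "cconj_vec v \<in> vec.span (cconj_vec ` prod_vecs_pconj \<phi>)"
      using vec.span_mono by blast
    then show ?thesis using span_cconj by fastforce
  qed
  ultimately show ?thesis by blast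
qed

lemma sum_list_zero_all: "\<forall>p\<in>set L. f p = (0::complex) \<Longrightarrow> (\<Sum>p\<leftarrow>L. f p) = 0"
  by (induction L) auto

lemma part1_bwd:
  fixes \<phi> :: "complex^'m::finite^'m \<Rightarrow> complex^'n::finite^'n"
  assumes pos: "positive_map \<phi>" and sp: "vec.span (prod_vecs \<phi>) = UNIV" "vec.span (prod_vecs_pconj \<phi>) = UNIV"
  shows "\<exists>A\<in>dual_face \<phi>. A \<in> ppt_interior"
proof -
  have cl: "clinear_map \<phi>" using pos positive_map_def by blast
  define Z where "Z = {p. cip (\<phi> (vouter (fst p)) *v snd p) (snd p) = 0}"
  define g :: "(complex^'m) \<times> (complex^'n) \<Rightarrow> complex^('n \<times> 'm)"
    where "g = (\<lambda>p. vtens (cconj_vec (snd p)) (cconj_vec (fst p)))"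
  have P: "prod_vecs \<phi> = pvec ` Z" unfolding Z_def prod_vecs_img ..
  have Pc: "prod_vecs_pconj \<phi> = g ` Z" unfolding Z_def g_def prod_vecs_pconj_img ..
  obtain B1 where B1: "B1 \<subseteq> prod_vecs \<phi>" "vec.independent B1" "prod_vecs \<phi> \<subseteq> vec.span B1"
    using vec.maximal_independent_subset by blast
  obtain B2 where B2: "B2 \<subseteq> prod_vecs_pconj \<phi>" "vec.independent B2" "prod_vecs_pconj \<phi> \<subseteq> vec.span B2"
    using vec.maximal_independent_subset by blast
  obtain C1 where C1: "C1 \<subseteq> Z" "finite C1" "B1 = pvec ` C1"
    using finite_subset_image[OF vec.finiteI_independent[OF B1(2)], of pvec Z] B1(1) P by blast
  obtain C2 where C2: "C2 \<subseteq> Z" "finite C2" "B2 = g ` C2"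
    using finite_subset_image[OF vec.finiteI_independent[OF B2(2)], of g Z] B2(1) Pc by blast
  obtain L1 where L1: "set L1 = C1" using finite_list C1(2) by blast
  obtain L2 where L2: "set L2 = C2" using finite_list C2(2) by blast
  define L where "L = L1 @ L2"
  have LZ: "set L \<subseteq> Z" using L_def L1 L2 C1 C2 by auto
  define A where "A = pvsum L"
  have "pairing A \<phi> = 0"
    unfolding A_def pairing_pvsum[OF cl] using LZ Z_def by (intro sum_list_zero_all) auto
  then have Ad: "A \<in> dual_face \<phi>" unfolding dual_face_def A_def using pvsum_sep by blast
  have psdA: "psd A" "psd (ptrans A)" unfolding A_def ptrans_pvsum unfolding pvsum_def by (rule vouters_psd)+
  have frA: "full_range A"
  proof (rule inj_full_range)
    fix z assume "A *v z = 0"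
    then have "cip (A *v z) z = 0" by simp
    then have "\<forall>u\<in>set (map pvec L). cip z u = 0" unfolding A_def pvsum_def vouters_form_zero .
    then have h: "\<forall>u\<in>B1. cip z u = 0" using C1(3) L1 L_def by auto
    have "\<And>u. u \<in> B1 \<Longrightarrow> cip u z = 0"
    proof -
      fix u assume "u \<in> B1"
      then have "cnj (cip z u) = 0" using h by simp
      then show "cip u z = 0" by (simp add: cip_cnj)
    qed
    then show "z = 0" using orth_span_zero[OF sp(1) B1(3)] by blast
  qed
  have frB: "full_range (ptrans A)"
  proof (rule inj_full_range)
    fix z assume "ptrans A *v z = 0"
    then have "cip (ptrans A *v z) z = 0" by simp
    then have h: "\<forall>u\<in>set (map pvec' L). cip z u = 0" unfolding A_def ptrans_pvsum vouters_form_zero .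
    have "cip u (cconj_vec z) = 0" if uin: "u \<in> B2" for u
    proof -
      obtain p where p: "p \<in> C2" "u = g p" using uin C2(3) by blast
      have "u = cconj_vec (pvec' p)" unfolding p(2) g_def pvec'_def vtens_cconj ..
      then have "cip u (cconj_vec z) = cip z (pvec' p)" by (simp add: cip_cconj)
      also have "\<dots> = 0" using h p(1) L2 L_def by auto
      finally show ?thesis .
    qed
    then have "cconj_vec z = 0" using orth_span_zero[OF sp(2) B2(3)] by blast
    then show "z = 0" by (simp add: cconj_eq0)
  qed
  have "A \<in> ppt_interior" unfolding ppt_interior_def ppt_cone_def using psdA frA frB by blast
  then show ?thesis using Ad by blast
qed

lemma psd_form_nonneg: "psd A \<Longrightarrow> Im (cip (A *v v) v) = 0 \<and> 0 \<le> Re (cip (A *v v) v)"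
  unfolding psd_def by blast

lemma part2a:
  fixes \<phi> :: "complex^'m::finite^'m \<Rightarrow> complex^'n::finite^'n"
  assumes dec: "decomposable \<phi>" and A: "A \<in> dual_face \<phi>" "A \<in> ppt_interior"
  shows "\<phi> = (\<lambda>X. 0)"
proof -
  obtain r s :: nat and V W :: "nat \<Rightarrow> complex^'n^'m" where
    phi: "\<phi> = (\<lambda>X. (\<Sum>p<r. cadj (V p) ** X ** V p) + (\<Sum>q<s. cadj (W q) ** transpose X ** W q))"
    using dec unfolding decomposable_def by blast
  define vv where "vv p = (\<chi> i. V p $ snd i $ fst i)" for p
  define ww where "ww q = (\<chi> i. cnj (W q $ snd i $ fst i))" for q
  have psdA: "psd A" "psd (ptrans A)" and fr: "full_range A" "full_range (ptrans A)"
    using A(2) unfolding ppt_interior_def ppt_cone_def by auto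
  have "pairing A \<phi> = (\<Sum>p<r. cip (A *v vv p) (vv p)) + (\<Sum>q<s. cip (ptrans A *v ww q) (ww q))"
    unfolding phi pairing_fadd pairing_fsum pairing_adV pairing_adW vv_def ww_def ..
  moreover have "pairing A \<phi> = 0" using A(1) unfolding dual_face_def by blast
  ultimately have sum0: "(\<Sum>p<r. cip (A *v vv p) (vv p)) + (\<Sum>q<s. cip (ptrans A *v ww q) (ww q)) = 0" by simp
  define a where "a = (\<Sum>p<r. cip (A *v vv p) (vv p))"
  define b where "b = (\<Sum>q<s. cip (ptrans A *v ww q) (ww q))"
  have na: "Im a = 0" "0 \<le> Re a" unfolding a_def using psd_form_nonneg[OF psdA(1)]
    by (auto simp: sum_nonneg)
  have nb: "Im b = 0" "0 \<le> Re b" unfolding b_def using psd_form_nonneg[OF psdA(2)]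
    by (auto simp: sum_nonneg)
  have "a + b = 0" using sum0 a_def b_def by simp
  then have "Re a + Re b = 0" by (metis plus_complex.simps(1) zero_complex.simps(1))
  then have "Re a = 0" "Re b = 0" using na nb by auto
  then have ab: "a = 0" "b = 0" using na nb by (auto simp: complex_eq_iff)
  have "\<forall>p\<in>{..<r}. cip (A *v vv p) (vv p) = 0"
    by (rule nonneg_sum_zero) (use ab a_def psd_form_nonneg[OF psdA(1)] in auto)
  then have V0: "V p = 0" if "p < r" for p
  proof -
    have "A *v vv p = 0" using psd_form_zero[OF psdA(1)] \<open>\<forall>p\<in>{..<r}. _\<close> that by auto
    then have "vv p = 0" using full_range_inj[OF fr(1)] by blast
    have "V p $ l $ j = 0" for l j
    proof -
      have "V p $ l $ j = vv p $ (j,l)" by (simp add: vv_def)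
      then show ?thesis using \<open>vv p = 0\<close> by simp
    qed
    then show ?thesis by (simp add: vec_eq_iff)
  qed
  have "\<forall>q\<in>{..<s}. cip (ptrans A *v ww q) (ww q) = 0"
    by (rule nonneg_sum_zero) (use ab b_def psd_form_nonneg[OF psdA(2)] in auto)
  then have W0: "W q = 0" if "q < s" for q
  proof -
    have "ptrans A *v ww q = 0" using psd_form_zero[OF psdA(2)] \<open>\<forall>q\<in>{..<s}. _\<close> that by auto
    then have "ww q = 0" using full_range_inj[OF fr(2)] by blast
    have "cnj (W q $ l $ j) = 0" for l j
    proof -
      have "cnj (W q $ l $ j) = ww q $ (j,l)" by (simp add: ww_def)
      then show ?thesis using \<open>ww q = 0\<close> by simp
    qed
    then show ?thesis by (simp add: vec_eq_iff)
  qed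
  show ?thesis unfolding phi using V0 W0 by (intro ext) simp
qed

lemma scale_sandwich: "cadj (mscale (of_real c) V) ** M ** mscale (of_real c) V
   = mscale (of_real (c * c)) (cadj V ** M ** (V::complex^'n::finite^'m::finite))"
  by (simp add: cadj_mscale_real mscale_mult_left mscale_mult_right mscale_mscale mult.commute)

lemma rescale:
  fixes V :: "complex^'n::finite^'m::finite"
  assumes "(\<lambda>X. cadj V ** F X ** V) = (\<lambda>X. mscale (of_real t) (\<phi> X))" "t > 0"
  shows "\<phi> = (\<lambda>X. cadj (mscale (of_real (1/sqrt t)) V) ** F X ** mscale (of_real (1/sqrt t)) V)"
proof
  fix X
  have e: "cadj V ** F X ** V = mscale (of_real t) (\<phi> X)" using assms(1) by meson
  have c: "1 / sqrt t * (1 / sqrt t) = 1 / t" using assms(2) by (simp add: real_sqrt_mult[symmetric])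
  have "cadj (mscale (of_real (1/sqrt t)) V) ** F X ** mscale (of_real (1/sqrt t)) V
      = mscale (of_real (1/t)) (mscale (of_real t) (\<phi> X))"
    unfolding scale_sandwich c e ..
  also have "\<dots> = \<phi> X" using assms(2) by (simp add: mscale_mscale mscale_one)
  finally show "\<phi> X = cadj (mscale (of_real (1/sqrt t)) V) ** F X ** mscale (of_real (1/sqrt t)) V" by simp
qed

lemma pairing_vouter_self: "z \<noteq> 0 \<Longrightarrow> cip (vouter z *v z) z \<noteq> 0"
  by (simp add: vouter_form cip_self_eq0)

lemma part2b:
  fixes \<phi> :: "complex^'m::finite^'m \<Rightarrow> complex^'n::finite^'n"
  assumes pos: "positive_map \<phi>" and ex: "exposed \<phi>" and nz: "\<phi> \<noteq> (\<lambda>X. 0)"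
    and ns: "\<not> (vec.span (prod_vecs \<phi>) = UNIV \<and> vec.span (prod_vecs_pconj \<phi>) = UNIV)"
  shows "decomposable \<phi>"
proof (cases "vec.span (prod_vecs \<phi>) = UNIV")
  case False
  then obtain z where z: "z \<noteq> 0" "\<And>u. u \<in> prod_vecs \<phi> \<Longrightarrow> cip u z = 0"
    using orth_exists by blast
  define V :: "complex^'n^'m" where "V = (\<chi> l j. z $ (j,l))"
  have vz: "(\<chi> p. V $ snd p $ fst p) = z" by (simp add: V_def vec_eq_iff)
  define \<psi> where "\<psi> = (\<lambda>X. cadj V ** X ** V)"
  have pa: "pairing A \<psi> = cip (A *v z) z" for A unfolding \<psi>_def pairing_adV vz ..
  have "\<psi> \<in> dual_face_maps (dual_face \<phi>)"
    unfolding dual_face_maps_def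
  proof (intro CollectI conjI ballI)
    show "positive_map \<psi>" unfolding \<psi>_def by (rule adV_pos)
  next
    fix A assume "A \<in> dual_face \<phi>"
    then obtain L where L: "A = pvsum L" "\<forall>p\<in>set L. cip (\<phi> (vouter (fst p)) *v snd p) (snd p) = 0"
      using dual_face_decomp[OF pos] by blast
    have "\<forall>u\<in>set (map pvec L). cip z u = 0"
    proof
      fix u assume "u \<in> set (map pvec L)"
      then have "u \<in> prod_vecs \<phi>" using L(2) unfolding prod_vecs_img by auto
      then have "cnj (cip u z) = 0" using z(2) by simp
      then show "cip z u = 0" by (simp add: cip_cnj)
    qed
    then show "pairing A \<psi> = 0" unfolding pa L(1) pvsum_def vouters_form_zero .
  qed
  then have "\<psi> \<in> ray \<phi>" using ex unfolding exposed_def by simp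
  then obtain t where t: "\<psi> = (\<lambda>X. mscale (of_real t) (\<phi> X))" "t \<ge> 0" unfolding ray_def by blast
  have "t \<noteq> 0"
  proof
    assume "t = 0"
    then have "pairing (vouter z) \<psi> = 0" unfolding t(1) pairing_fscale by simp
    then show False using pa pairing_vouter_self[OF z(1)] by simp
  qed
  then have "\<phi> = (\<lambda>X. cadj (mscale (of_real (1/sqrt t)) V) ** X ** mscale (of_real (1/sqrt t)) V)"
    using rescale[of V "\<lambda>X. X" t \<phi>] t \<psi>_def by simp
  then show ?thesis unfolding decomposable_def
    by (intro exI[of _ "1"] exI[of _ "0"] exI[of _ "\<lambda>_. mscale (of_real (1/sqrt t)) V"]) simp
next
  case True
  then have "vec.span (prod_vecs_pconj \<phi>) \<noteq> UNIV" using ns by blast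
  then obtain z where z: "z \<noteq> 0" "\<And>u. u \<in> prod_vecs_pconj \<phi> \<Longrightarrow> cip u z = 0"
    using orth_exists by blast
  define W :: "complex^'n^'m" where "W = (\<chi> b a. z $ (a,b))"
  have wz: "(\<chi> p. cnj (W $ snd p $ fst p)) = cconj_vec z" by (simp add: W_def vec_eq_iff cconj_vec_def)
  define \<psi> where "\<psi> = (\<lambda>X. cadj W ** transpose X ** W)"
  have pa: "pairing A \<psi> = cip (ptrans A *v cconj_vec z) (cconj_vec z)" for A
    unfolding \<psi>_def pairing_adW wz ..
  have "\<psi> \<in> dual_face_maps (dual_face \<phi>)"
    unfolding dual_face_maps_def
  proof (intro CollectI conjI ballI)
    show "positive_map \<psi>" unfolding \<psi>_def by (rule adW_pos)
  next
    fix A assume "A \<in> dual_face \<phi>"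
    then obtain L where L: "A = pvsum L" "\<forall>p\<in>set L. cip (\<phi> (vouter (fst p)) *v snd p) (snd p) = 0"
      using dual_face_decomp[OF pos] by blast
    have "\<forall>u\<in>set (map pvec' L). cip (cconj_vec z) u = 0"
    proof
      fix u assume "u \<in> set (map pvec' L)"
      then obtain p where p: "p \<in> set L" "u = pvec' p" by auto
      have g: "vtens (cconj_vec (snd p)) (cconj_vec (fst p)) \<in> prod_vecs_pconj \<phi>"
        unfolding prod_vecs_pconj_img using L(2) p(1) by blast
      have "u = cconj_vec (vtens (cconj_vec (snd p)) (cconj_vec (fst p)))"
        unfolding p(2) pvec'_def vtens_cconj by simp
      then have "cip (cconj_vec z) u = cip (vtens (cconj_vec (snd p)) (cconj_vec (fst p))) z"
        by (simp add: cip_cconj)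
      then show "cip (cconj_vec z) u = 0" using z(2)[OF g] by simp
    qed
    then show "pairing A \<psi> = 0" unfolding pa L(1) ptrans_pvsum vouters_form_zero .
  qed
  then have "\<psi> \<in> ray \<phi>" using ex unfolding exposed_def by simp
  then obtain t where t: "\<psi> = (\<lambda>X. mscale (of_real t) (\<phi> X))" "t \<ge> 0" unfolding ray_def by blast
  have cz: "cconj_vec z \<noteq> 0" using z(1) cconj_eq0 by blast
  have "t \<noteq> 0"
  proof
    assume "t = 0"
    then have "pairing (ptrans (vouter (cconj_vec z))) \<psi> = 0" unfolding t(1) pairing_fscale by simp
    then show False using pa pairing_vouter_self[OF cz] by simp
  qed
  then have "\<phi> = (\<lambda>X. cadj (mscale (of_real (1/sqrt t)) W) ** transpose X ** mscale (of_real (1/sqrt t)) W)"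
    using rescale[of W "\<lambda>X. transpose X" t \<phi>] t \<psi>_def by simp
  then show ?thesis unfolding decomposable_def
    by (intro exI[of _ "0"] exI[of _ "1"] exI[of _ "\<lambda>_. W"] exI[of _ "\<lambda>_. mscale (of_real (1/sqrt t)) W"]) simp
qed


theorem proposition3p1:
  fixes \<phi> :: "complex^'m::finite^'m \<Rightarrow> complex^'n::finite^'n"
  assumes "positive_map \<phi>"
  shows "((\<exists>A\<in>dual_face \<phi>. A \<in> ppt_interior) \<longleftrightarrow>
            (vec.span (prod_vecs \<phi>) = UNIV \<and> vec.span (prod_vecs_pconj \<phi>) = UNIV))
       \<and> (exposed \<phi> \<and> \<phi> \<noteq> (\<lambda>X. 0) \<longrightarrow>
            ((\<exists>A\<in>dual_face \<phi>. A \<in> ppt_interior) \<longleftrightarrow> \<not> decomposable \<phi>))"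
proof -
  have P1: "(\<exists>A\<in>dual_face \<phi>. A \<in> ppt_interior) \<longleftrightarrow>
            (vec.span (prod_vecs \<phi>) = UNIV \<and> vec.span (prod_vecs_pconj \<phi>) = UNIV)"
    using part1_fwd[OF assms] part1_bwd[OF assms] by blast
  show ?thesis
  proof (intro conjI impI)
    show "(\<exists>A\<in>dual_face \<phi>. A \<in> ppt_interior) \<longleftrightarrow>
            (vec.span (prod_vecs \<phi>) = UNIV \<and> vec.span (prod_vecs_pconj \<phi>) = UNIV)" by (rule P1)
  next
    assume H: "exposed \<phi> \<and> \<phi> \<noteq> (\<lambda>X. 0)"
    show "(\<exists>A\<in>dual_face \<phi>. A \<in> ppt_interior) \<longleftrightarrow> \<not> decomposable \<phi>"
    proof
      assume "\<exists>A\<in>dual_face \<phi>. A \<in> ppt_interior"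
      then show "\<not> decomposable \<phi>" using part2a H by blast
    next
      assume nd: "\<not> decomposable \<phi>"
      show "\<exists>A\<in>dual_face \<phi>. A \<in> ppt_interior"
      proof (rule ccontr)
        assume "\<not> (\<exists>A\<in>dual_face \<phi>. A \<in> ppt_interior)"
        then have "\<not> (vec.span (prod_vecs \<phi>) = UNIV \<and> vec.span (prod_vecs_pconj \<phi>) = UNIV)" using P1 by blast
        then have "decomposable \<phi>" using part2b[OF assms] H by blast
        then show False using nd by blast
      qed
    qed
  qed
qed

end
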